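(* Let $T\subset\mathbb{R}^3$ be a smooth (open) surface patch with smooth unit normal field $\mathring\nu$, and let $P=I-\mathring\nu\otimes\mathring\nu$. Let $u\in[C^2(\overline T)]^3$, $\phi=\mathrm{id}+u$, and $F:=\nabla_\tau\phi=P+\nabla_\tau u$, and assume $\operatorname{rank}F=2$ on $T$. Let $\nu:=\operatorname{cof}(F)\mathring\nu/\|\operatorname{cof}(F)\mathring\nu\|_2$ (the deformed normal pulled back to $T$, so that $F^T\nu=0$). Let $\sigma$ be a symmetric $3\times3$ matrix field on $T$ with $\sigma\mathring\nu=0$. Then pointwise on $T$ $$\sigma:\big(F^T\nabla_\tau\nu-\nabla_\tau\mathring\nu\big)=-\,\sigma:\Big(\mathcal H_\nu+\big(1-\mathring\nu\cdot\nu\big)\nabla_\tau\mathring\nu\Big),\qquad \mathcal H_\nu:=\sum_{i=1}^3\nu_i\,\nabla_\tau^2u_i .$$ In particular, for such $\sigma$, $\int_T\sigma:(F^T\nabla_\tau\nu-\nabla_\tau\mathring\nu)\,dx=-\int_T\sigma:(\mathcal H_\nu+(1-\mathring\nu\cdot\nu)\nabla_\tau\mathring\nu)\,dx$.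
   Context: For a scalar function $f$ on $T$, $\nabla_\tau f\in\mathbb{R}^3$ is the surface (tangential) gradient, e.g. $\nabla_\tau f=P\nabla\tilde f$ for any smooth extension $\tilde f$. For a vector field $w$, $\nabla_\tau w$ is the $3\times3$ matrix with $(\nabla_\tau w)_{ij}=(\nabla_\tau w_i)_j$ (so $(\nabla_\tau w)\mathring\nu=0$). The surface Hessian of a scalar $f$ is $\nabla_\tau^2f:=\nabla_\tau(\nabla_\tau f)$, i.e. $(\nabla^2_\tau f)_{jk}=(\nabla_\tau(\nabla_\tau f)_j)_k$. $A:B=\sum_{ij}A_{ij}B_{ij}$, $\operatorname{cof}$ denotes the cofactor matrix and $a\otimes b=ab^T$. *)

theory Defs
  imports "HOL-Analysis.Analysis"
begin

definition outer :: "real^'n \<Rightarrow> real^'n \<Rightarrow> real^'n^'n" where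
  "outer a b = (\<chi> i j. a$i * b$j)"

definition projP :: "real^'n \<Rightarrow> real^'n^'n" where
  "projP n = mat 1 - outer n n"

definition frob :: "real^'n^'m \<Rightarrow> real^'n^'m \<Rightarrow> real" where
  "frob A B = (\<Sum>i\<in>UNIV. \<Sum>j\<in>UNIV. A$i$j * B$i$j)"

text \<open>Cofactor matrix: entry (i,j) is (-1)^(i+j) times the (i,j) minor, written as the
  determinant of A with row i replaced by the j-th unit row vector.\<close>
definition cofactor :: "real^'n^'n \<Rightarrow> real^'n^'n" where
  "cofactor A = (\<chi> i j. det (\<chi> k l. if k = i then (if l = j then 1 else 0) else A$k$l))"

definition amb_grad :: "(real^'n \<Rightarrow> real) \<Rightarrow> real^'n \<Rightarrow> real^'n" where
  "amb_grad f x = (\<chi> j. frechet_derivative f (at x) (axis j 1))"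

text \<open>Tangential gradient of a scalar function (given by a smooth extension f),
  relative to the normal field nu: P grad f.\<close>
definition tgrad :: "(real^'n \<Rightarrow> real^'n) \<Rightarrow> (real^'n \<Rightarrow> real) \<Rightarrow> real^'n \<Rightarrow> real^'n" where
  "tgrad nu f x = projP (nu x) *v amb_grad f x"

definition tgradV :: "(real^'n \<Rightarrow> real^'n) \<Rightarrow> (real^'n \<Rightarrow> real^'n) \<Rightarrow> real^'n \<Rightarrow> real^'n^'n" where
  "tgradV nu w x = (\<chi> i. tgrad nu (\<lambda>y. w y $ i) x)"

definition thess :: "(real^'n \<Rightarrow> real^'n) \<Rightarrow> (real^'n \<Rightarrow> real) \<Rightarrow> real^'n \<Rightarrow> real^'n^'n" where
  "thess nu f x = tgradV nu (\<lambda>y. tgrad nu f y) x"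

definition C1_on :: "'a::euclidean_space set \<Rightarrow> ('a \<Rightarrow> 'b::real_normed_vector) \<Rightarrow> bool" where
  "C1_on U f \<longleftrightarrow> f differentiable_on U \<and>
     (\<forall>j\<in>Basis. continuous_on U (\<lambda>x. frechet_derivative f (at x) j))"

definition C2_on :: "'a::euclidean_space set \<Rightarrow> ('a \<Rightarrow> 'b::real_normed_vector) \<Rightarrow> bool" where
  "C2_on U f \<longleftrightarrow> C1_on U f \<and> (\<forall>j\<in>Basis. C1_on U (\<lambda>x. frechet_derivative f (at x) j))"

text \<open>T is a smooth surface patch X(D) with unit normal field nu (nu given by a smooth
  ambient extension on the open set U containing T).\<close>
definition surface_patch ::
  "(real^2 \<Rightarrow> real^3) \<Rightarrow> (real^2) set \<Rightarrow> (real^3) set \<Rightarrow> (real^3 \<Rightarrow> real^3) \<Rightarrow> bool" where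
  "surface_patch X D T nu \<longleftrightarrow> open D \<and> T = X ` D \<and> inj_on X D \<and> C2_on D X \<and>
     (\<forall>s\<in>D. inj (frechet_derivative X (at s))) \<and>
     (\<forall>s\<in>D. norm (nu (X s)) = 1 \<and> (\<forall>j\<in>Basis. nu (X s) \<bullet> frechet_derivative X (at s) j = 0))"

definition area_elem :: "(real^2 \<Rightarrow> real^3) \<Rightarrow> real^2 \<Rightarrow> real" where
  "area_elem X s = (let a = frechet_derivative X (at s) (axis 1 1);
                        b = frechet_derivative X (at s) (axis 2 1)
                    in sqrt ((a \<bullet> a) * (b \<bullet> b) - (a \<bullet> b)^2))"

end

theory Submission
  imports Defs
begin



lemma cof_adj: fixes A :: "real^3^3"
  shows "transpose A *v (cofactor A *v n) = det A *\<^sub>R n"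
  by (simp add: vec_eq_iff forall_3 matrix_vector_mult_def sum_3 transpose_def cofactor_def det_3; algebra)

lemma cof_entry: fixes A :: "real^3^3"
  shows "(cofactor A *v n) $ 1 = n$1 * (A$2$2*A$3$3 - A$2$3*A$3$2) + n$2 * (A$2$3*A$3$1 - A$2$1*A$3$3) + n$3*(A$2$1*A$3$2 - A$2$2*A$3$1)"
   "(cofactor A *v n) $ 2 = n$1 * (A$3$2*A$1$3 - A$3$3*A$1$2) + n$2 * (A$3$3*A$1$1 - A$3$1*A$1$3) + n$3*(A$3$1*A$1$2 - A$3$2*A$1$1)"
   "(cofactor A *v n) $ 3 = n$1 * (A$1$2*A$2$3 - A$1$3*A$2$2) + n$2 * (A$1$3*A$2$1 - A$1$1*A$2$3) + n$3*(A$1$1*A$2$2 - A$1$2*A$2$1)"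
  by (simp_all add: matrix_vector_mult_def sum_3 cofactor_def det_3; algebra)+

lemma cross_perp0:
  fixes a1 a2 a3 b1 b2 b3 n1 n2 n3 :: real
  assumes "a1*n1+a2*n2+a3*n3=0" "b1*n1+b2*n2+b3*n3=0" "n1*n1+n2*n2+n3*n3=1"
  shows "a2*b3 - a3*b2 = (n1*(a2*b3-a3*b2) + n2*(a3*b1-a1*b3) + n3*(a1*b2-a2*b1)) * n1"
    "a3*b1 - a1*b3 = (n1*(a2*b3-a3*b2) + n2*(a3*b1-a1*b3) + n3*(a1*b2-a2*b1)) * n2"
    "a1*b2 - a2*b1 = (n1*(a2*b3-a3*b2) + n2*(a3*b1-a1*b3) + n3*(a1*b2-a2*b1)) * n3"
  using assms by algebra+

lemma cross_perp:
  fixes a1 a2 a3 b1 b2 b3 n1 n2 n3 :: real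
  assumes "a1*n1+a2*n2+a3*n3=0" "b1*n1+b2*n2+b3*n3=0" "n1*n1+n2*n2+n3*n3=1"
    "n1*(a2*b3-a3*b2) + n2*(a3*b1-a1*b3) + n3*(a1*b2-a2*b1) = 0"
  shows "a2*b3 - a3*b2 = 0" "a3*b1 - a1*b3 = 0" "a1*b2 - a2*b1 = 0"
  using cross_perp0[OF assms(1-3), unfolded assms(4)] by simp_all

lemma lagr:
  fixes a1 a2 a3 b1 b2 b3 :: real
  assumes "a2*b3 - a3*b2 = 0" "a3*b1 - a1*b3 = 0" "a1*b2 - a2*b1 = 0"
  shows "(a1*a1+a2*a2+a3*a3) * b1 = (a1*b1+a2*b2+a3*b3)*a1"
     "(a1*a1+a2*a2+a3*a3) * b2 = (a1*b1+a2*b2+a3*b3)*a2"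
     "(a1*a1+a2*a2+a3*a3) * b3 = (a1*b1+a2*b2+a3*b3)*a3"
  using assms by algebra+

lemma lagr_vec:
  fixes a b :: "real^3"
  assumes "a$2*b$3 - a$3*b$2 = 0" "a$3*b$1 - a$1*b$3 = 0" "a$1*b$2 - a$2*b$1 = 0"
  shows "(a \<bullet> a) *\<^sub>R b = (a \<bullet> b) *\<^sub>R a"
  using lagr[OF assms] by (simp add: vec_eq_iff forall_3 inner_vec_def sum_3)

lemma row_span:
  fixes a b :: "real^3"
  assumes "a \<noteq> 0" "(a \<bullet> a) *\<^sub>R b = (a \<bullet> b) *\<^sub>R a"
  shows "b \<in> span {a}"
proof -
  have "a \<bullet> a \<noteq> 0" using assms(1) by simp
  have "b = (1/(a \<bullet> a)) *\<^sub>R ((a \<bullet> a) *\<^sub>R b)" using \<open>a \<bullet> a \<noteq> 0\<close> by simp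
  also have "\<dots> = ((a \<bullet> b)/(a \<bullet> a)) *\<^sub>R a" by (simp add: assms(2))
  finally have "b = ((a \<bullet> b)/(a \<bullet> a)) *\<^sub>R a" .
  moreover have "((a \<bullet> b)/(a \<bullet> a)) *\<^sub>R a \<in> span {a}" by (intro span_scale span_base) simp
  ultimately show ?thesis by simp
qed

lemma cof_nonzero:
  fixes A :: "real^3^3" and n :: "real^3"
  assumes rk: "rank A = 2" and An: "A *v n = 0" and nn: "n \<bullet> n = 1"
  shows "cofactor A *v n \<noteq> 0"
proof
  assume w: "cofactor A *v n = 0"
  have n1: "n$1*n$1+n$2*n$2+n$3*n$3 = 1" using nn by (simp add: inner_vec_def sum_3)
  have r: "A$i$1*n$1 + A$i$2*n$2 + A$i$3*n$3 = 0" for i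
    using An by (simp add: vec_eq_iff matrix_vector_mult_def sum_3 mult.commute)
  have w1: "n$1 * (A$2$2*A$3$3 - A$2$3*A$3$2) + n$2 * (A$2$3*A$3$1 - A$2$1*A$3$3) + n$3*(A$2$1*A$3$2 - A$2$2*A$3$1) = 0"
    using w cof_entry(1)[of A n] by simp
  have w2: "n$1 * (A$3$2*A$1$3 - A$3$3*A$1$2) + n$2 * (A$3$3*A$1$1 - A$3$1*A$1$3) + n$3*(A$3$1*A$1$2 - A$3$2*A$1$1) = 0"
    using w cof_entry(2)[of A n] by simp
  have w3: "n$1 * (A$1$2*A$2$3 - A$1$3*A$2$2) + n$2 * (A$1$3*A$2$1 - A$1$1*A$2$3) + n$3*(A$1$1*A$2$2 - A$1$2*A$2$1) = 0"
    using w cof_entry(3)[of A n] by simp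
  note c23 = cross_perp[OF r[of 2] r[of 3] n1 w1]
  note c31 = cross_perp[OF r[of 3] r[of 1] n1 w2]
  note c12 = cross_perp[OF r[of 1] r[of 2] n1 w3]
  have cr: "(A$i$2*A$j$3 - A$i$3*A$j$2 = 0) \<and> (A$i$3*A$j$1 - A$i$1*A$j$3 = 0) \<and> (A$i$1*A$j$2 - A$i$2*A$j$1 = 0)" for i j
  proof -
    have "\<forall>i j. (A$i$2*A$j$3 - A$i$3*A$j$2 = 0) \<and> (A$i$3*A$j$1 - A$i$1*A$j$3 = 0) \<and> (A$i$1*A$j$2 - A$i$2*A$j$1 = 0)"
      unfolding forall_3 using c23 c31 c12 by (simp add: mult.commute)
    then show ?thesis by blast
  qed
  have lg: "(A$i \<bullet> A$i) *\<^sub>R A$j = (A$i \<bullet> A$j) *\<^sub>R A$i" for i j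
    using cr[of i j] by (intro lagr_vec) auto
  have "rank A \<le> 1"
  proof (cases "\<exists>i. A$i \<noteq> 0")
    case True
    then obtain i where i: "A$i \<noteq> 0" by blast
    have "rows A \<subseteq> span {A$i}"
      using row_span[OF i lg] by (auto simp: rows_def row_def)
    then have "dim (rows A) \<le> card {A$i}" by (intro dim_le_card) auto
    then show ?thesis by (simp add: row_rank_def)
  next
    case False
    then have "A = 0" by (simp add: vec_eq_iff)
    then show ?thesis by simp
  qed
  then show False using rk by simp
qed



lemma vec_sum_axis: "(v::real^'n) = (\<Sum>j\<in>UNIV. v$j *\<^sub>R axis j 1)"
  by (simp add: vec_eq_iff axis_def if_distrib cong: if_cong)

lemma lin_expand:
  fixes f :: "real^'n \<Rightarrow> real"
  assumes "linear f"
  shows "f v = (\<chi> j. f (axis j 1)) \<bullet> v"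
proof -
  have "f v = f (\<Sum>j\<in>UNIV. v$j *\<^sub>R axis j 1)" using vec_sum_axis[of v] by simp
  also have "\<dots> = (\<Sum>j\<in>UNIV. v$j * f (axis j 1))"
    using assms by (simp add: linear_sum linear_scale)
  finally show ?thesis by (simp add: inner_vec_def mult.commute)
qed

lemma nth_diff: "f differentiable F \<Longrightarrow> (\<lambda>y. (f y :: real^'n) $ i) differentiable F"
  unfolding differentiable_def using bounded_linear.has_derivative[OF bounded_linear_vec_nth] by blast

lemma amb_grad_has: "(f has_derivative f') (at x) \<Longrightarrow> amb_grad f x = (\<chi> j. f' (axis j 1))"
  unfolding amb_grad_def by (simp add: frechet_derivative_at[symmetric])

lemma amb_grad_mult:
  assumes "f differentiable (at x)" "g differentiable (at x)"
  shows "amb_grad (\<lambda>y. f y * g y) x = f x *\<^sub>R amb_grad g x + g x *\<^sub>R amb_grad f x"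
proof -
  obtain f' g' where f: "(f has_derivative f') (at x)" and g: "(g has_derivative g') (at x)"
    using assms unfolding differentiable_def by blast
  show ?thesis using amb_grad_has[OF has_derivative_mult[OF f g]] amb_grad_has[OF f] amb_grad_has[OF g]
    by (simp add: vec_eq_iff mult.commute)
qed

lemma amb_grad_add:
  assumes "f differentiable (at x)" "g differentiable (at x)"
  shows "amb_grad (\<lambda>y. f y + g y) x = amb_grad f x + amb_grad g x"
proof -
  obtain f' g' where f: "(f has_derivative f') (at x)" and g: "(g has_derivative g') (at x)"
    using assms unfolding differentiable_def by blast
  show ?thesis using amb_grad_has[OF has_derivative_add[OF f g]] amb_grad_has[OF f] amb_grad_has[OF g]
    by (simp add: vec_eq_iff)
qed

lemma amb_grad_diff:
  assumes "f differentiable (at x)" "g differentiable (at x)"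
  shows "amb_grad (\<lambda>y. f y - g y) x = amb_grad f x - amb_grad g x"
proof -
  obtain f' g' where f: "(f has_derivative f') (at x)" and g: "(g has_derivative g') (at x)"
    using assms unfolding differentiable_def by blast
  show ?thesis using amb_grad_has[OF has_derivative_diff[OF f g]] amb_grad_has[OF f] amb_grad_has[OF g]
    by (simp add: vec_eq_iff)
qed

lemma amb_grad_const: "amb_grad (\<lambda>y. c) x = 0"
  using amb_grad_has[OF has_derivative_const] by (simp add: vec_eq_iff)

lemma amb_grad_sum:
  assumes "finite A" "\<And>a. a \<in> A \<Longrightarrow> f a differentiable (at x)"
  shows "amb_grad (\<lambda>y. \<Sum>a\<in>A. f a y) x = (\<Sum>a\<in>A. amb_grad (f a) x)"
  using assms
proof (induction A rule: finite_induct)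
  case empty then show ?case by (simp add: amb_grad_const)
next
  case (insert a A)
  have d: "(\<lambda>y. \<Sum>a\<in>A. f a y) differentiable (at x)"
    using insert by (intro differentiable_sum) auto
  have "amb_grad (\<lambda>y. \<Sum>a\<in>insert a A. f a y) x = amb_grad (\<lambda>y. f a y + (\<Sum>a\<in>A. f a y)) x"
    using insert by simp
  also have "\<dots> = amb_grad (f a) x + amb_grad (\<lambda>y. \<Sum>a\<in>A. f a y) x"
    using amb_grad_add[of "f a" x, OF _ d] insert by simp
  finally show ?case using insert by simp
qed

lemma tgrad_mult:
  assumes "f differentiable (at x)" "g differentiable (at x)"
  shows "tgrad nu (\<lambda>y. f y * g y) x = f x *\<^sub>R tgrad nu g x + g x *\<^sub>R tgrad nu f x"
  using amb_grad_mult[OF assms] by (simp add: tgrad_def matrix_vector_right_distrib matrix_vector_mult_scaleR)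

lemma tgrad_add:
  assumes "f differentiable (at x)" "g differentiable (at x)"
  shows "tgrad nu (\<lambda>y. f y + g y) x = tgrad nu f x + tgrad nu g x"
  using amb_grad_add[OF assms] by (simp add: tgrad_def matrix_vector_right_distrib)

lemma tgrad_diff:
  assumes "f differentiable (at x)" "g differentiable (at x)"
  shows "tgrad nu (\<lambda>y. f y - g y) x = tgrad nu f x - tgrad nu g x"
  using amb_grad_diff[OF assms] by (simp add: tgrad_def matrix_vector_mult_diff_distrib)

lemma tgrad_const: "tgrad nu (\<lambda>y. c) x = 0"
  by (simp add: tgrad_def amb_grad_const)

lemma tgrad_sum:
  assumes "finite A" "\<And>a. a \<in> A \<Longrightarrow> f a differentiable (at x)"
  shows "tgrad nu (\<lambda>y. \<Sum>a\<in>A. f a y) x = (\<Sum>a\<in>A. tgrad nu (f a) x)"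
  using amb_grad_sum[OF assms] by (simp add: tgrad_def vec.sum)

lemma outer_mult: "outer a b *v g = (b \<bullet> g) *\<^sub>R a"
  by (simp add: vec_eq_iff outer_def matrix_vector_mult_def inner_vec_def sum_distrib_left algebra_simps)

lemma projP_mult: "projP n *v g = g - (n \<bullet> g) *\<^sub>R n"
  by (simp add: projP_def matrix_vector_mult_diff_rdistrib outer_mult)


lemma tgrad_vanish:
  assumes patch: "surface_patch X D T nu0" and s: "s \<in> D"
    and fd: "f differentiable (at (X s))" and z: "\<forall>s'\<in>D. f (X s') = 0"
  shows "tgrad nu0 f (X s) = 0"
proof -
  from patch have oD: "open D" and C2: "C2_on D X"
    and injX: "inj (frechet_derivative X (at s))"
    and nn: "norm (nu0 (X s)) = 1"
    and perp: "\<forall>j\<in>Basis. nu0 (X s) \<bullet> frechet_derivative X (at s) j = 0"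
    using s unfolding surface_patch_def by auto
  have "X differentiable_on D" using C2 unfolding C2_on_def C1_on_def by blast
  then have Xd: "X differentiable (at s)" using differentiable_on_eq_differentiable_at[OF oD] s by blast
  define X' where "X' = frechet_derivative X (at s)"
  have hX: "(X has_derivative X') (at s)" using Xd frechet_derivative_works X'_def by blast
  obtain f' where hf: "(f has_derivative f') (at (X s))" using fd unfolding differentiable_def by blast
  have ch: "((f \<circ> X) has_derivative (f' \<circ> X')) (at s)" by (rule diff_chain_at[OF hX hf])
  have ze: "((f \<circ> X) has_derivative (\<lambda>_. 0)) (at s)"
    by (rule has_derivative_transform_within_open[OF has_derivative_const oD s]) (use z in auto)
  have f'X': "f' (X' v) = 0" for v
  proof -
    have "(f' \<circ> X') = (\<lambda>_. 0)" by (rule has_derivative_unique[OF ch ze])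
    then show ?thesis by (metis comp_apply)
  qed
  define g where "g = amb_grad f (X s)"
  have g: "g = (\<chi> j. f' (axis j 1))" using amb_grad_has[OF hf] g_def by simp
  have linf: "linear f'" using has_derivative_linear[OF hf] .
  have fg: "f' h = g \<bullet> h" for h unfolding g by (rule lin_expand[OF linf])
  define n where "n = nu0 (X s)"
  have n1: "n \<bullet> n = 1" using nn n_def by (simp add: norm_eq_1)
  have linX: "linear X'" using has_derivative_linear[OF hX] .
  have nX: "n \<bullet> X' v = 0" for v
  proof -
    have "X' v = X' (\<Sum>b\<in>Basis. (v \<bullet> b) *\<^sub>R b)" by (simp add: euclidean_representation)
    also have "\<dots> = (\<Sum>b\<in>Basis. (v \<bullet> b) *\<^sub>R X' b)" using linX by (simp add: linear_sum linear_scale)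
    finally show ?thesis using perp by (simp add: n_def X'_def inner_sum_right)
  qed
  have sub: "range X' \<subseteq> {x. n \<bullet> x = 0}" using nX by auto
  have "dim (range X') = dim (UNIV :: (real^2) set)"
  proof (rule eucl.dim_image_eq[OF linX])
    show "inj_on X' (span UNIV)" using injX unfolding X'_def by (simp add: inj_on_def inj_def)
  qed
  then have d2: "dim (range X') = 2" by simp
  have n0: "n \<noteq> 0" using n1 by auto
  have dh: "dim {x. n \<bullet> x = 0} = 2" using dim_hyperplane[OF n0] by simp
  have eq: "range X' = {x. n \<bullet> x = 0}"
    by (rule subspace_dim_equal[OF linear_subspace_image[OF linX subspace_UNIV] subspace_hyperplane sub])
       (simp add: d2 dh)
  define v where "v = g - (n \<bullet> g) *\<^sub>R n"
  have "n \<bullet> v = 0" using n1 by (simp add: v_def inner_diff_right)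
  then obtain w where w: "v = X' w" using eq by blast
  have "v \<bullet> v = 0"
  proof -
    have "v \<bullet> v = v \<bullet> X' w" using w by simp
    also have "\<dots> = g \<bullet> X' w - (n \<bullet> g) * (n \<bullet> X' w)" by (simp add: v_def inner_diff_left)
    also have "\<dots> = 0" using f'X'[of w] fg[of "X' w"] nX[of w] by simp
    finally show ?thesis .
  qed
  then have "v = 0" by simp
  then show ?thesis by (simp add: tgrad_def projP_mult g_def[symmetric] n_def[symmetric] v_def)
qed



lemma final_alg:
  fixes Fx sig GG NN :: "real^3^3" and Hs :: "3 \<Rightarrow> real^3^3" and m n :: "real^3"
  assumes key: "\<And>k. (\<Sum>i\<in>UNIV. Fx$i$k *\<^sub>R GG$i + m$i *\<^sub>R (- (n$i *\<^sub>R NN$k + n$k *\<^sub>R NN$i) + Hs i $ k)) = 0"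
    and sym: "transpose sig = sig" and sn: "sig *v n = 0"
  shows "frob sig (transpose Fx ** GG - NN) = - frob sig ((\<Sum>i\<in>UNIV. m$i *\<^sub>R Hs i) + (1 - n \<bullet> m) *\<^sub>R NN)"
proof -
  define a where "a = (\<chi> j. \<Sum>i\<in>UNIV. m$i * NN$i$j)"
  define H where "H = (\<Sum>i\<in>UNIV. m$i *\<^sub>R Hs i)"
  have ent: "(transpose Fx ** GG - NN)$k$j = - (H + (1 - n \<bullet> m) *\<^sub>R NN)$k$j + n$k * a$j" for k j
  proof -
    have e: "(\<Sum>i\<in>UNIV. Fx$i$k * GG$i$j + m$i * (- (n$i * NN$k$j + n$k * NN$i$j) + Hs i $ k $ j)) = 0"
      using arg_cong[OF key[of k], of "\<lambda>v. v $ j"] by simp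
    then show ?thesis
      by (simp add: H_def a_def matrix_matrix_mult_def transpose_def inner_vec_def sum_3) algebra
  qed
  have z: "(\<Sum>k\<in>UNIV. \<Sum>j\<in>UNIV. sig$k$j * (n$k * a$j)) = 0"
  proof -
    have "(\<Sum>k\<in>UNIV. \<Sum>j\<in>UNIV. sig$k$j * (n$k * a$j)) = (\<Sum>j\<in>UNIV. a$j * (\<Sum>k\<in>UNIV. sig$k$j * n$k))"
      by (subst sum.swap) (simp add: sum_distrib_left algebra_simps)
    also have "\<dots> = (\<Sum>j\<in>UNIV. a$j * (transpose sig *v n)$j)"
      by (simp add: matrix_vector_mult_def transpose_def)
    also have "\<dots> = 0" using sym sn by simp
    finally show ?thesis .
  qed
  have "frob sig (transpose Fx ** GG - NN) = (\<Sum>k\<in>UNIV. \<Sum>j\<in>UNIV. sig$k$j * (- (H + (1 - n \<bullet> m) *\<^sub>R NN)$k$j) + sig$k$j * (n$k * a$j))"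
    unfolding frob_def ent by (simp add: algebra_simps)
  also have "\<dots> = - frob sig (H + (1 - n \<bullet> m) *\<^sub>R NN)"
    using z by (simp add: frob_def sum.distrib flip: sum_negf) (simp add: algebra_simps)
  finally show ?thesis by (simp add: H_def)
qed
theorem mainTheorem3:
  fixes X :: "real^2 \<Rightarrow> real^3" and D :: "(real^2) set"
    and T U :: "(real^3) set"
    and nu0 u :: "real^3 \<Rightarrow> real^3"
    and sigma :: "real^3 \<Rightarrow> real^3^3"
    and F :: "real^3 \<Rightarrow> real^3^3" and nu :: "real^3 \<Rightarrow> real^3"
    and H :: "real^3 \<Rightarrow> real^3^3"
  assumes patch: "surface_patch X D T nu0"
    and U: "open U" "closure T \<subseteq> U"
    and nu0_smooth: "C2_on U nu0"
    and u_smooth: "C2_on U u"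
    and F_def: "\<And>y. F y = projP (nu0 y) + tgradV nu0 u y"
    and rank2: "\<forall>x\<in>T. rank (F x) = 2"
    and nu_def: "\<And>y. nu y = (1 / norm (cofactor (F y) *v nu0 y)) *\<^sub>R (cofactor (F y) *v nu0 y)"
    and H_def: "\<And>y. H y = (\<Sum>i\<in>UNIV. nu y $ i *\<^sub>R thess nu0 (\<lambda>z. u z $ i) y)"
    and sigma_sym: "\<forall>x\<in>T. transpose (sigma x) = sigma x"
    and sigma_nu0: "\<forall>x\<in>T. sigma x *v nu0 x = 0"
  shows "(\<forall>x\<in>T. frob (sigma x) (transpose (F x) ** tgradV nu0 nu x - tgradV nu0 nu0 x)
                 = - frob (sigma x) (H x + (1 - nu0 x \<bullet> nu x) *\<^sub>R tgradV nu0 nu0 x))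
      \<and> integral D (\<lambda>s. frob (sigma (X s)) (transpose (F (X s)) ** tgradV nu0 nu (X s) - tgradV nu0 nu0 (X s))
                          * area_elem X s)
        = - integral D (\<lambda>s. frob (sigma (X s)) (H (X s) + (1 - nu0 (X s) \<bullet> nu (X s)) *\<^sub>R tgradV nu0 nu0 (X s))
                          * area_elem X s)"
proof -
  have oU: "open U" using U(1) .
  have TU: "T \<subseteq> U" using U(2) closure_subset by blast
  have Fn0: "F z *v nu0 z = 0" and nn: "nu0 z \<bullet> nu0 z = 1" if zT: "z \<in> T" for z
  proof -
    obtain s' where "s' \<in> D" "z = X s'" using patch zT unfolding surface_patch_def by blast
    then show nz: "nu0 z \<bullet> nu0 z = 1" using patch unfolding surface_patch_def by (auto simp: norm_eq_1)
    have p: "projP (nu0 z) *v nu0 z = 0" using nz by (simp add: projP_mult)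
    have t: "tgradV nu0 u z *v nu0 z = 0"
    proof -
      have "(tgradV nu0 u z *v nu0 z) $ i = 0" for i
      proof -
        have "(tgradV nu0 u z *v nu0 z) $ i = tgrad nu0 (\<lambda>y. u y $ i) z \<bullet> nu0 z"
          by (simp add: matrix_vector_mult_def tgradV_def inner_vec_def)
        also have "\<dots> = 0" using nz by (simp add: tgrad_def projP_mult inner_diff_left inner_commute inner_diff_right)
        finally show ?thesis .
      qed
      then show ?thesis by (simp add: vec_eq_iff)
    qed
    show "F z *v nu0 z = 0" using p t by (simp add: F_def matrix_vector_mult_add_rdistrib)
  qed
  have wz: "cofactor (F z) *v nu0 z \<noteq> 0" if "z \<in> T" for z
    using cof_nonzero[OF _ Fn0[OF that] nn[OF that]] rank2 that by blast
  have FTnu: "transpose (F z) *v nu z = 0" if "z \<in> T" for z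
  proof -
    have "det (F z) = 0" using rank2 that by (simp add: det_eq_0_rank)
    then show ?thesis using cof_adj[of "F z" "nu0 z"]
      by (simp add: nu_def matrix_vector_mult_scaleR)
  qed
  have pt: "\<forall>x\<in>T. frob (sigma x) (transpose (F x) ** tgradV nu0 nu x - tgradV nu0 nu0 x)
                 = - frob (sigma x) (H x + (1 - nu0 x \<bullet> nu x) *\<^sub>R tgradV nu0 nu0 x)"
  proof
    fix x assume xT: "x \<in> T"
    obtain s where s: "s \<in> D" "x = X s" using patch xT unfolding surface_patch_def by blast
    have xU: "x \<in> U" using TU xT by blast
    have "nu0 differentiable_on U" using nu0_smooth unfolding C2_on_def C1_on_def by blast
    then have "nu0 differentiable (at x)" using differentiable_on_eq_differentiable_at[OF oU] xU by blast
    then have nd: "(\<lambda>y. nu0 y $ i) differentiable (at x)" for i by (rule nth_diff)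
    have ud: "u differentiable (at y)" if "y \<in> U" for y
    proof -
      have "u differentiable_on U" using u_smooth unfolding C2_on_def C1_on_def by blast
      then show ?thesis using differentiable_on_eq_differentiable_at[OF oU] that by blast
    qed
    have gu_eq: "amb_grad (\<lambda>z. u z $ i) y $ l = frechet_derivative u (at y) (axis l 1) $ i" if "y \<in> U" for y i l
    proof -
      have "(u has_derivative frechet_derivative u (at y)) (at y)"
        using ud[OF that] frechet_derivative_works by blast
      from bounded_linear.has_derivative[OF bounded_linear_vec_nth this, of i]
      show ?thesis by (simp add: amb_grad_has)
    qed
    have gud: "(\<lambda>y. amb_grad (\<lambda>z. u z $ i) y $ l) differentiable (at x)" for i l
    proof -
      have "axis l (1::real) \<in> Basis" by (simp add: axis_in_Basis_iff)
      then have "(\<lambda>y. frechet_derivative u (at y) (axis l 1)) differentiable_on U"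
        using u_smooth unfolding C2_on_def C1_on_def by blast
      then have "(\<lambda>y. frechet_derivative u (at y) (axis l 1)) differentiable (at x)"
        using differentiable_on_eq_differentiable_at[OF oU] xU by blast
      then have "(\<lambda>y. frechet_derivative u (at y) (axis l 1) $ i) differentiable (at x)" by (rule nth_diff)
      then obtain d where d: "((\<lambda>y. frechet_derivative u (at y) (axis l 1) $ i) has_derivative d) (at x)"
        unfolding differentiable_def by blast
      have "((\<lambda>y. amb_grad (\<lambda>z. u z $ i) y $ l) has_derivative d) (at x)"
        by (rule has_derivative_transform_within_open[OF d oU xU]) (simp add: gu_eq)
      then show ?thesis unfolding differentiable_def by blast
    qed
    define tu where "tu i k = (\<lambda>y. tgrad nu0 (\<lambda>z. u z $ i) y $ k)" for i k
    have tu_eq: "tu i k = (\<lambda>y. \<Sum>l\<in>UNIV. ((mat 1::real^3^3) $ k $ l - nu0 y $ k * nu0 y $ l) * amb_grad (\<lambda>z. u z $ i) y $ l)" for i k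
      by (simp add: tu_def tgrad_def projP_def outer_def matrix_vector_mult_def fun_eq_iff)
    have tud: "tu i k differentiable (at x)" for i k
      unfolding tu_eq by (auto intro!: differentiable_sum differentiable_mult differentiable_diff nd gud)
    define Fe where "Fe i k = (\<lambda>y. F y $ i $ k)" for i k
    have Fe_fun: "Fe i k = (\<lambda>y. ((mat 1::real^3^3) $ i $ k - nu0 y $ i * nu0 y $ k) + tu i k y)" for i k
      by (simp add: Fe_def fun_eq_iff F_def projP_def outer_def tgradV_def tu_def)
    have Fed: "(\<lambda>y. F y $ i $ k) differentiable (at x)" for i k
    proof -
      have "Fe i k differentiable (at x)" unfolding Fe_fun
        by (intro differentiable_add differentiable_diff differentiable_mult differentiable_const nd tud)
      then show ?thesis by (simp add: Fe_def)
    qed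
    define w where "w y = cofactor (F y) *v nu0 y" for y
    have wd: "(\<lambda>y. w y $ i) differentiable (at x)" for i
    proof -
      have "(\<lambda>y. w y $ 1) differentiable (at x)" "(\<lambda>y. w y $ 2) differentiable (at x)" "(\<lambda>y. w y $ 3) differentiable (at x)"
        unfolding w_def cof_entry by (intro differentiable_add differentiable_mult differentiable_diff Fed nd)+
      then show ?thesis using exhaust_3[of i] by auto
    qed
    have wvd: "w differentiable (at x)"
      unfolding differentiable_componentwise_within[of w]
      using wd by (auto simp: Basis_vec_def inner_axis)
    have wx: "w x \<noteq> 0" using wz[OF xT] by (simp add: w_def)
    have normd: "(\<lambda>y. norm (w y)) differentiable (at x)"
      by (rule differentiable_compose[of norm, OF differentiable_norm_at[OF wx] wvd])
    have nu_eq: "(\<lambda>y. nu y $ i) = (\<lambda>y. inverse (norm (w y)) * w y $ i)" for i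
      by (simp add: fun_eq_iff nu_def w_def divide_inverse)
    have nud: "(\<lambda>y. nu y $ i) differentiable (at x)" for i
      unfolding nu_eq using wx by (intro differentiable_mult differentiable_inverse normd wd) auto
    define fk where "fk k = (\<lambda>y. \<Sum>i\<in>UNIV. F y $ i $ k * nu y $ i)" for k
    have fkz: "\<forall>s'\<in>D. fk k (X s') = 0" for k
    proof
      fix s' assume "s' \<in> D"
      then have "X s' \<in> T" using patch unfolding surface_patch_def by blast
      from FTnu[OF this] have "(transpose (F (X s')) *v nu (X s')) $ k = 0" by simp
      then show "fk k (X s') = 0" by (simp add: fk_def matrix_vector_mult_def transpose_def)
    qed
    have fkd: "fk k differentiable (at x)" for k
      unfolding fk_def by (intro differentiable_sum ballI differentiable_mult Fed nud) auto
    have van: "tgrad nu0 (fk k) x = 0" for k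
      using tgrad_vanish[OF patch s(1) _ fkz] fkd s(2) by blast
    define NN where "NN = tgradV nu0 nu0 x"
    define GG where "GG = tgradV nu0 nu x"
    define Hs where "Hs i = thess nu0 (\<lambda>z. u z $ i) x" for i
    have NNi: "NN $ i = tgrad nu0 (\<lambda>y. nu0 y $ i) x" for i by (simp add: NN_def tgradV_def)
    have GGi: "GG $ i = tgrad nu0 (\<lambda>y. nu y $ i) x" for i by (simp add: GG_def tgradV_def)
    have tFe: "tgrad nu0 (\<lambda>y. F y $ i $ k) x = - (nu0 x $ i *\<^sub>R NN $ k + nu0 x $ k *\<^sub>R NN $ i) + Hs i $ k" for i k
    proof -
      have "tgrad nu0 (\<lambda>y. F y $ i $ k) x = tgrad nu0 (\<lambda>y. ((mat 1::real^3^3) $ i $ k - nu0 y $ i * nu0 y $ k) + tu i k y) x"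
        using Fe_fun[of i k] unfolding Fe_def by simp
      also have "\<dots> = tgrad nu0 (\<lambda>y. (mat 1::real^3^3) $ i $ k - nu0 y $ i * nu0 y $ k) x + tgrad nu0 (tu i k) x"
        using tud[of i k] nd by (intro tgrad_add) (auto intro!: differentiable_diff differentiable_mult)
      also have "tgrad nu0 (\<lambda>y. (mat 1::real^3^3) $ i $ k - nu0 y $ i * nu0 y $ k) x
          = - (nu0 x $ i *\<^sub>R NN $ k + nu0 x $ k *\<^sub>R NN $ i)"
        using nd by (simp add: tgrad_diff tgrad_const tgrad_mult NNi)
      also have "tgrad nu0 (tu i k) x = Hs i $ k"
        by (simp add: Hs_def thess_def tgradV_def tu_def)
      finally show ?thesis .
    qed
    have key: "(\<Sum>i\<in>UNIV. F x $ i $ k *\<^sub>R GG $ i + nu x $ i *\<^sub>R (- (nu0 x $ i *\<^sub>R NN $ k + nu0 x $ k *\<^sub>R NN $ i) + Hs i $ k)) = 0" for k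
    proof -
      have "tgrad nu0 (fk k) x = (\<Sum>i\<in>UNIV. tgrad nu0 (\<lambda>y. F y $ i $ k * nu y $ i) x)"
        unfolding fk_def by (rule tgrad_sum) (auto intro!: differentiable_mult Fed nud)
      also have "\<dots> = (\<Sum>i\<in>UNIV. F x $ i $ k *\<^sub>R GG $ i + nu x $ i *\<^sub>R (- (nu0 x $ i *\<^sub>R NN $ k + nu0 x $ k *\<^sub>R NN $ i) + Hs i $ k))"
        by (rule sum.cong) (simp_all add: tgrad_mult[OF Fed nud] GGi tFe)
      finally show ?thesis using van by simp
    qed
    have "frob (sigma x) (transpose (F x) ** GG - NN) = - frob (sigma x) ((\<Sum>i\<in>UNIV. nu x $ i *\<^sub>R Hs i) + (1 - nu0 x \<bullet> nu x) *\<^sub>R NN)"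
      by (rule final_alg[OF key]) (use sigma_sym sigma_nu0 xT in auto)
    then show "frob (sigma x) (transpose (F x) ** tgradV nu0 nu x - tgradV nu0 nu0 x)
                 = - frob (sigma x) (H x + (1 - nu0 x \<bullet> nu x) *\<^sub>R tgradV nu0 nu0 x)"
      by (simp add: GG_def NN_def Hs_def H_def)
  qed
  have XT: "X s \<in> T" if "s \<in> D" for s using patch that unfolding surface_patch_def by blast
  have "integral D (\<lambda>s. frob (sigma (X s)) (transpose (F (X s)) ** tgradV nu0 nu (X s) - tgradV nu0 nu0 (X s)) * area_elem X s)
      = integral D (\<lambda>s. - (frob (sigma (X s)) (H (X s) + (1 - nu0 (X s) \<bullet> nu (X s)) *\<^sub>R tgradV nu0 nu0 (X s)) * area_elem X s))"
    by (rule integral_cong) (use pt XT in simp)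
  then show ?thesis using pt by simp
qed

end
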